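(* For $i=1,\dots,m$ let $k_i$ be a positive integer, $\mu_i>0$, $\alpha_i\neq 0$ a real constant, and $\bar x_i$ a real number. Define $\mathcal U_i(p_i)=1-\alpha_i p_i$ on the interval $P_i=\{p_i\in\mathbb R: \mathcal U_i(p_i)\in(0,1)\}$. For $u\in(0,1)$ let $f_i(u)$ denote the unique positive real root $y$ of $$F_i(y,u)=\sum_{j=0}^{k_i}\frac{1}{\mu_i^{j-1}}\left[\frac{j-uk_i}{j!}\right]y^{j}=0,$$ and, writing $y=f_i(u)$, $\rho=y/\mu_i$, $\pi_0=\left[\sum_{j=0}^{k_i}\rho^j/j!\right]^{-1}$ and $\pi_{k_i}=\pi_0\rho^{k_i}/k_i!$, define the rejection rate $g_i(p_i)=f_i(\mathcal U_i(p_i))\cdot \pi_{k_i}$ for $p_i\in P_i$. Then the optimization problem $$\text{maximize}_{\mathbf p}\ \ \mathcal U(\mathbf p)\quad\text{subject to}\quad g_i(p_i)\le \bar x_i,\ i=1,\dots,m,$$ where $\mathcal U(\mathbf p)=(\mathcal U_1(p_1),\dots,\mathcal U_m(p_m))$ and $\mathbf p=(p_1,\dots,p_m)\in P_1\times\cdots\times P_m$, is a convex optimization problem; that is, the objective is affine (hence concave) in $\mathbf p$ and each constraint function $g_i$ is convex in $p_i$ on $P_i$.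
   Context: Each block-face $i$ is modeled as a multi-server loss queue with $k_i$ servers (parking spaces), per-server service rate $\mu_i$, total arrival rate $y$, and stationary probabilities $\pi_j=\pi_0\rho^j/j!$ ($j=0,\dots,k_i$) of $j$ busy servers, where $\rho=y/\mu_i$. The occupancy is $u=\frac{y}{k_i\mu_i}(1-\pi_{k_i})$; for $u\in(0,1)$ the total arrival rate $y$ producing occupancy $u$ is the unique positive root $f_i(u)$ of $F_i(y,u)=0$. Price $p_i$ determines occupancy through the linear demand model $\mathcal U_i(p_i)=1-\alpha_i p_i$, and $g_i(p_i)$ is the rate at which vehicles are rejected by (find no space at) block-face $i$. *)

theory Defs
  imports "HOL-Analysis.Analysis"
begin

definition occ :: "real \<Rightarrow> real \<Rightarrow> real" where
  "occ alpha p = 1 - alpha * p"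

definition price_dom :: "real \<Rightarrow> real set" where
  "price_dom alpha = {p. 0 < occ alpha p \<and> occ alpha p < 1}"

definition Fpoly :: "nat \<Rightarrow> real \<Rightarrow> real \<Rightarrow> real \<Rightarrow> real" where
  "Fpoly k mu y u =
     (\<Sum>j = 0..k. (1 / (mu powi (int j - 1))) * ((real j - u * real k) / fact j) * y ^ j)"

definition froot :: "nat \<Rightarrow> real \<Rightarrow> real \<Rightarrow> real" where
  "froot k mu u = (THE y. y > 0 \<and> Fpoly k mu y u = 0)"

definition erlang_block :: "nat \<Rightarrow> real \<Rightarrow> real" where
  "erlang_block k rho = (1 / (\<Sum>j = 0..k. rho ^ j / fact j)) * rho ^ k / fact k"

definition rej_rate :: "nat \<Rightarrow> real \<Rightarrow> real \<Rightarrow> real \<Rightarrow> real" where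
  "rej_rate k mu alpha p =
     (let y = froot k mu (occ alpha p) in y * erlang_block k (y / mu))"

end

theory Submission
  imports Defs
begin

primrec hh :: "nat \<Rightarrow> real \<Rightarrow> real" where
  "hh 0 s = 1"
| "hh (Suc n) s = hh n s / (real (Suc n) * s + hh n s)"

primrec hdv :: "nat \<Rightarrow> real \<Rightarrow> real" where
  "hdv 0 s = 0"
| "hdv (Suc n) s = real (Suc n) * (s * hdv n s - hh n s) / (real (Suc n) * s + hh n s)^2"

lemma hh_pos: "s \<ge> 0 \<Longrightarrow> 0 < hh n s \<and> hh n s \<le> 1"
proof (induction n)
  case 0 then show ?case by simp
next
  case (Suc n)
  then have a: "0 < hh n s" "hh n s \<le> 1" by auto
  have "real (Suc n) * s \<ge> 0" using Suc.prems by simp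
  then show ?case using a by (auto simp: divide_simps)
qed

lemma hh_lb: "s \<ge> 0 \<Longrightarrow> hh n s \<ge> 1 - real n * s"
proof (induction n)
  case 0 then show ?case by simp
next
  case (Suc n)
  have p: "0 < hh n s" using hh_pos Suc.prems by blast
  have ks: "real (Suc n) * s \<ge> 0" using Suc.prems by simp
  have "hh n s \<ge> 1 - real (Suc n) * s" using Suc by (simp add: algebra_simps)
  then have d: "real (Suc n) * s * (hh n s - (1 - real (Suc n) * s)) \<ge> 0" using ks by simp
  have "hh n s - (1 - real (Suc n) * s) * (real (Suc n) * s + hh n s)
      = real (Suc n) * s * (hh n s - (1 - real (Suc n) * s))" by (simp add: algebra_simps)
  then have "hh n s \<ge> (1 - real (Suc n) * s) * (real (Suc n) * s + hh n s)" using d by linarith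
  then show ?case using p ks by (simp add: divide_simps)
qed

lemma hh_lt1: "s > 0 \<Longrightarrow> n > 0 \<Longrightarrow> hh n s < 1"
proof (cases n)
  case (Suc m)
  assume "s > 0"
  then have "0 < hh m s" using hh_pos by simp
  moreover have "real (Suc m) * s > 0" using \<open>s>0\<close> by simp
  ultimately show ?thesis using Suc by (simp add: divide_simps)
qed simp

lemma hh_0: "hh n 0 = 1"
  by (induction n) auto

lemma hd_0: "hdv n 0 = - real n"
  by (induction n) (auto simp: hh_0)

lemma hh_deriv: "s \<ge> 0 \<Longrightarrow> (hh n has_real_derivative hdv n s) (at s)"
proof (induction n)
  case 0 then show ?case by simp
next
  case (Suc n)
  have p: "0 < hh n s" using hh_pos Suc.prems by blast
  have ks: "real (Suc n) * s \<ge> 0" using Suc.prems by simp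
  have ne: "real (Suc n) * s + hh n s \<noteq> 0" using p ks by linarith
  have "((\<lambda>s. hh n s / (real (Suc n) * s + hh n s)) has_real_derivative
     ((hdv n s * (real (Suc n) * s + hh n s) - hh n s * (real (Suc n) + hdv n s)) / (real (Suc n) * s + hh n s)^2)) (at s)"
    by (rule derivative_eq_intros Suc.IH[OF Suc.prems] refl | use ne in \<open>simp add: power2_eq_square\<close>)+
  moreover have "(hdv n s * (real (Suc n) * s + hh n s) - hh n s * (real (Suc n) + hdv n s)) / (real (Suc n) * s + hh n s)^2
      = hdv (Suc n) s" by (simp add: algebra_simps)
  moreover have "hh (Suc n) = (\<lambda>s. hh n s / (real (Suc n) * s + hh n s))" by auto
  ultimately show ?case by metis
qed

lemma hd_ode: "s > 0 \<Longrightarrow> hdv n s = ((1 - real n * s) * hh n s - (hh n s)^2) / s^2"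
proof (induction n)
  case 0 then show ?case by (simp add: power2_eq_square)
next
  case (Suc n)
  define h where "h = hh n s"
  define K where "K = real (Suc n)"
  have p: "0 < h" using hh_pos Suc.prems h_def by (simp)
  have ks: "K * s > 0" using Suc.prems K_def by simp
  have ne: "K * s + h \<noteq> 0" using p ks by linarith
  have IH: "hdv n s = ((1 - (K - 1) * s) * h - h^2) / s^2" using Suc K_def h_def by simp
  define d where "d = K * s + h"
  have dne: "d \<noteq> 0" using ne d_def by simp
  have s0: "s \<noteq> 0" using Suc.prems by simp
  have a: "s * hdv n s - h = h * (1 - K * s - h) / s"
    unfolding IH using s0 by (simp add: field_simps power2_eq_square)
  have "hdv (Suc n) s = K * (s * hdv n s - h) / d^2" by (simp add: K_def h_def d_def)
  also have "\<dots> = K * s * h * (1 - K * s - h) / (d^2 * s^2)"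
    unfolding a using s0 dne by (simp add: field_simps power2_eq_square)
  also have "K * s * h * (1 - K * s - h) = (1 - K * s) * h * d - h^2"
    unfolding d_def by (simp add: algebra_simps power2_eq_square)
  also have "((1 - K * s) * h * d - h^2) / (d^2 * s^2) = ((1 - K * s) * (h / d) - (h / d)^2) / s^2"
    using s0 dne by (simp add: field_simps power2_eq_square)
  finally show ?case by (simp add: K_def h_def d_def)
qed

definition Qf :: "real \<Rightarrow> real \<Rightarrow> real \<Rightarrow> real" where
  "Qf K s x = 2*x^2 + ((3*K+2)* s - 3)*x + K*(K+1)* s^2 - 2*(K+1)* s + 1"

lemma Q_step:
  fixes K s x :: real
  assumes x: "x > 0" and s: "s > 0" and K: "K \<ge> 1" and lb: "x \<ge> 1 - (K-1)* s"
    and q: "Qf (K-1) s x \<ge> 0"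
  shows "Qf K s (x / (K* s + x)) \<ge> 0"
proof -
  define w where "w = 4*x + (3*K-1)* s - 3"
  have w0: "w \<ge> 0"
  proof (cases "(K-3)* s \<le> 1")
    case True
    then show ?thesis using lb unfolding w_def by (simp add: algebra_simps)
  next
    case False
    then show ?thesis using x s unfolding w_def by (simp add: algebra_simps)
  qed
  define D where "D = 1 + (6-2*K)* s + (K+1)^2* s^2"
  have "8 * Qf (K-1) s x = w^2 - D"
    unfolding Qf_def w_def D_def by (simp add: power2_eq_square algebra_simps)
  then have wD: "w^2 \<ge> D" using q by linarith
  define E where "E = (K+1)^2* s^2 - 2*K* s + 1"
  have E0: "E > 0"
  proof -
    have "E = ((K+1)* s - 1)^2 + 2* s" unfolding E_def by (simp add: power2_eq_square algebra_simps)
    moreover have "((K+1) * s - 1)^2 \<ge> 0" by simp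
    ultimately show ?thesis using s by linarith
  qed
  define C where "C = K*(K+1)^2* s^3 - (3*K^2+K)* s^2 + (3*K-1)* s - 1"
  define Z where "Z = E*((3*K-1)* s-3) - 4*C"
  have "E^2*D - Z^2 = 32* s^3"
    unfolding E_def D_def Z_def C_def by (simp add: power2_eq_square power3_eq_cube algebra_simps)
  moreover have "s^3 > 0" using s by simp
  ultimately have "Z^2 \<le> E^2 * D" by linarith
  also have "\<dots> \<le> E^2 * w^2" using wD by (simp add: mult_left_mono)
  also have "\<dots> = (E*w)^2" by (simp add: power_mult_distrib)
  finally have "Z^2 \<le> (E*w)^2" .
  moreover have "E*w \<ge> 0" using E0 w0 by simp
  ultimately have "\<bar>Z\<bar> \<le> E*w" using power2_le_imp_le abs_le_square_iff by (metis abs_of_nonneg)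
  then have Zw: "Z \<le> E*w" by simp
  have "E*x + C = (E*w - Z)/4" unfolding w_def Z_def by (simp add: algebra_simps)
  then have EC: "E*x + C \<ge> 0" using Zw by simp
  have ne: "K* s + x > 0" using K s x by (simp add: add_pos_pos)
  define d where "d = K* s + x"
  have dne: "d \<noteq> 0" using ne d_def by simp
  have id1: "d^2 * Qf K s (x / d) = 2*x^2 + ((3*K+2)* s - 3)*x*d + (K*(K+1)* s^2 - 2*(K+1)* s + 1)*d^2"
    using dne by (simp add: Qf_def field_simps power2_eq_square)
  have id2: "2*(2*x^2 + ((3*K+2)* s - 3)*x*d + (K*(K+1)* s^2 - 2*(K+1)* s + 1)*d^2)
      = K* s*(((K+1)* s+1) * Qf (K-1) s x + (E*x + C))"
    unfolding Qf_def E_def C_def d_def by (simp add: algebra_simps power2_eq_square power3_eq_cube)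
  have id: "2*((K* s + x)^2 * Qf K s (x / (K* s + x))) = K* s*(((K+1)* s+1) * Qf (K-1) s x + (E*x + C))"
    using id1 id2 d_def by simp
  have "0 \<le> K* s*(((K+1)* s+1) * Qf (K-1) s x + (E*x + C))"
  proof -
    have "0 \<le> ((K+1)* s+1) * Qf (K-1) s x" using K s q by simp
    then have "0 \<le> ((K+1)* s+1) * Qf (K-1) s x + (E*x + C)" using EC by linarith
    moreover have "0 \<le> K* s" using K s by simp
    ultimately show ?thesis by simp
  qed
  then have "0 \<le> (K* s + x)^2 * Qf K s (x / (K* s + x))" using id by simp
  then show ?thesis using ne by (simp add: zero_le_mult_iff)
qed

lemma hh_Q: "s > 0 \<Longrightarrow> Qf (real n) s (hh n s) \<ge> 0"
proof (induction n)
  case 0 then show ?case by (simp add: Qf_def power2_eq_square)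
next
  case (Suc n)
  have p: "0 < hh n s" using hh_pos Suc.prems by simp
  have lb: "hh n s \<ge> 1 - (real (Suc n) - 1) * s" using hh_lb[of s n] Suc.prems by simp
  have q: "Qf (real (Suc n) - 1) s (hh n s) \<ge> 0" using Suc by simp
  show ?case using Q_step[OF p Suc.prems _ lb q] by simp
qed

lemma hdv_deriv:
  assumes s: "s > 0"
  shows "(hdv n has_real_derivative hh n s * Qf (real n) s (hh n s) / s^4) (at s)"
proof -
  define G where "G = ((1 - real n * s) * hh n s - (hh n s)^2) / s^2"
  have dh: "(hh n has_real_derivative G) (at s)" using hh_deriv[of s n] hd_ode[OF s] s G_def by simp
  have s0: "s \<noteq> 0" using s by simp
  have "((\<lambda>s. ((1 - real n * s) * hh n s - (hh n s)^2) / s^2) has_real_derivative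
      hh n s * Qf (real n) s (hh n s) / s^4) (at s)"
    apply (rule derivative_eq_intros dh refl)+
    using s0 apply (simp_all add: G_def Qf_def field_simps power2_eq_square)
    by algebra
  moreover have "\<forall>x\<in>{0<..}. ((1 - real n * x) * hh n x - (hh n x)^2) / x^2 = hdv n x"
    using hd_ode by simp
  ultimately show ?thesis
    using has_field_derivative_transform_within_open[of _ _ s "{0<..}"] s by auto
qed

lemma hh_convex: "convex_on {0<..} (hh n)"
proof (rule f''_ge0_imp_convex[where f' = "hdv n" and f'' = "\<lambda>s. hh n s * Qf (real n) s (hh n s) / s^4"])
  show "convex ({0<..} :: real set)" by simp
  show "\<And>x. x \<in> {0<..} \<Longrightarrow> (hh n has_real_derivative hdv n x) (at x)" using hh_deriv by simp
  show "\<And>x. x \<in> {0<..} \<Longrightarrow> (hdv n has_real_derivative hh n x * Qf (real n) x (hh n x) / x^4) (at x)"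
    using hdv_deriv by simp
  show "\<And>x. x \<in> {0<..} \<Longrightarrow> 0 \<le> hh n x * Qf (real n) x (hh n x) / x^4"
    using hh_pos hh_Q by (simp add: less_imp_le)
qed

lemma hh_lb_strict: "s > 0 \<Longrightarrow> n > 0 \<Longrightarrow> hh n s > 1 - real n * s"
proof (cases n)
  case (Suc m)
  assume s: "s > 0"
  define x where "x = hh m s"
  define K where "K = real (Suc m)"
  have p: "0 < x" using hh_pos s x_def by simp
  have ks: "K * s > 0" using s K_def by simp
  have "x \<ge> 1 - real m * s" using hh_lb s x_def by simp
  then have "x > 1 - K * s" using s K_def by (simp add: algebra_simps)
  then have "x * (K * s) > (1 - K * s) * (K * s)" using ks by (simp add: mult_strict_right_mono)
  then have "x > (1 - K * s) * (K * s + x)" by (simp add: algebra_simps)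
  then have "x / (K * s + x) > 1 - K * s" using p ks by (simp add: divide_simps)
  then show ?thesis using Suc x_def K_def by simp
qed simp

lemma E_pos: "r \<ge> 0 \<Longrightarrow> (\<Sum>j = 0..n. r ^ j / fact j) > (0::real)"
  by (induction n) (auto simp: add_pos_nonneg)

lemma hh_inv: assumes r: "r > 0" shows "hh n (1/r) = (r^n / fact n) / (\<Sum>j = 0..n. r ^ j / fact j)"
proof (induction n)
  case 0 then show ?case by simp
next
  case (Suc n)
  define S where "S = (\<Sum>j = 0..n. r ^ j / fact j)"
  define T where "T = r^n / fact n"
  have S: "S > 0" using E_pos r S_def by simp
  have T: "T > 0" using r T_def by simp
  define K where "K = real (Suc n)"
  have K: "K > 0" using K_def by simp
  have "hh (Suc n) (1/r) = (T/S) / (K * (1/r) + T/S)" using Suc S_def T_def K_def by simp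
  also have "\<dots> = r * T / (K * S + r * T)"
    using S T r K by (simp add: field_simps)
  also have "\<dots> = (r * T / K) / (S + r * T / K)"
    using S T r K by (simp add: field_simps)
  also have "r * T / K = r^(Suc n) / fact (Suc n)"
    unfolding T_def K_def by (simp add: fact_Suc field_simps)
  finally show ?case by (simp add: S_def)
qed

lemma eb_hh: "r > 0 \<Longrightarrow> erlang_block k r = hh k (1/r)"
  unfolding erlang_block_def by (simp add: hh_inv)

definition cl :: "nat \<Rightarrow> real \<Rightarrow> real" where
  "cl k r = r * (1 - erlang_block k r)"

lemma pos_comb: fixes u v a b lo :: real
  assumes "0 \<le> u" "0 \<le> v" "u + v = 1" "lo < a" "lo < b"
  shows "lo < u * a + v * b"
proof (cases "u > 0")
  case True
  have "u * (a - lo) > 0" using True assms by simp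
  moreover have "v * (b - lo) \<ge> 0" using assms by simp
  ultimately have "u * (a - lo) + v * (b - lo) > 0" by linarith
  then show ?thesis using assms(3) by (simp add: algebra_simps) (metis add.commute add_diff_cancel_right' distrib_left mult.right_neutral)
next
  case False
  then have "u = 0" "v = 1" using assms by auto
  then show ?thesis using assms by simp
qed

lemma persp:
  assumes f: "convex_on {0<..} f" and g: "\<And>r. r > 0 \<Longrightarrow> g r = r * (1 - f (1/r))"
  shows "concave_on {0<..} (g::real \<Rightarrow> real)"
  unfolding concave_on_iff
proof (intro conjI ballI allI impI)
  show "convex ({0<..} :: real set)" by simp
  fix x y u v :: real
  assume x: "x \<in> {0<..}" and y: "y \<in> {0<..}" and u: "0 \<le> u" and v: "0 \<le> v" and uv: "u + v = 1"
  have x0: "x > 0" and y0: "y > 0" using x y by auto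
  define z where "z = u * x + v * y"
  have z0: "z > 0" unfolding z_def using pos_comb[OF u v uv, of 0 x y] x0 y0 by simp
  define l where "l = u * x / z"
  define m where "m = v * y / z"
  have l0: "l \<ge> 0" "m \<ge> 0" using u v x0 y0 z0 l_def m_def by auto
  have "l + m = (u * x + v * y) / z" unfolding l_def m_def by (simp add: add_divide_distrib)
  then have lm: "l + m = 1" using z0 z_def by simp
  have "l * (1/x) = u / z" using x0 unfolding l_def by simp
  moreover have "m * (1/y) = v / z" using y0 unfolding m_def by simp
  ultimately have "l * (1/x) + m * (1/y) = (u + v) / z" by (simp add: add_divide_distrib)
  then have iz: "l * (1/x) + m * (1/y) = 1/z" using uv by simp
  have cf: "\<forall>a\<in>{0<..}. \<forall>b\<in>{0<..}. \<forall>u\<ge>0. \<forall>v\<ge>0. u + v = 1 \<longrightarrow> f (u *\<^sub>R a + v *\<^sub>R b) \<le> u * f a + v * f b"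
    using f unfolding convex_on_def by blast
  have "f (l *\<^sub>R (1/x) + m *\<^sub>R (1/y)) \<le> l * f (1/x) + m * f (1/y)"
    using cf[rule_format, of "1/x" "1/y" l m] l0 lm x0 y0 by simp
  then have fz: "f (1/z) \<le> l * f (1/x) + m * f (1/y)" using iz by simp
  have "z * f (1/z) \<le> z * (l * f (1/x) + m * f (1/y))" using fz z0 by (simp add: mult_left_mono)
  also have "\<dots> = (z * l) * f (1/x) + (z * m) * f (1/y)" by (simp add: algebra_simps)
  also have "z * l = u * x" using z0 unfolding l_def by simp
  also have "z * m = v * y" using z0 unfolding m_def by simp
  also have "(u * x) * f (1/x) + (v * y) * f (1/y) = u * (x * f (1/x)) + v * (y * f (1/y))" by simp
  finally have "z * f (1/z) \<le> u * (x * f (1/x)) + v * (y * f (1/y))" .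
  then have "u * (x * (1 - f (1/x))) + v * (y * (1 - f (1/y))) \<le> z * (1 - f (1/z))"
    unfolding z_def by (simp add: algebra_simps)
  then show "u * g x + v * g y \<le> g (u *\<^sub>R x + v *\<^sub>R y)"
    using g x0 y0 z0 unfolding z_def by simp
qed

lemma cl_concave: "concave_on {0<..} (cl k)"
  by (rule persp[OF hh_convex[of k]]) (simp add: cl_def eb_hh)

lemma cl_bounds:
  assumes "r > 0" "k > 0"
  shows "0 < cl k r" "cl k r < r" "cl k r < real k"
proof -
  have h: "0 < hh k (1/r)" "hh k (1/r) < 1" "hh k (1/r) > 1 - real k * (1/r)"
    using hh_pos[of "1/r" k] hh_lt1[of "1/r" k] hh_lb_strict[of "1/r" k] assms by auto
  have c: "cl k r = r * (1 - hh k (1/r))" by (simp add: cl_def eb_hh assms)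
  show "0 < cl k r" unfolding c using h assms by simp
  show "cl k r < r" unfolding c using h assms by simp
  have "r * (1 - hh k (1/r)) < r * (real k * (1/r))" using h assms by (intro mult_strict_left_mono) auto
  then show "cl k r < real k" unfolding c using assms by simp
qed

lemma cl_cont: "0 < a \<Longrightarrow> continuous_on {a..b} (cl k)"
  unfolding cl_def erlang_block_def
  by (intro continuous_intros) (auto intro!: E_pos[THEN less_imp_neq[THEN not_sym]])

lemma cl_big:
  assumes k: "k > 0" and v: "v < real k"
  shows "\<exists>r > R. cl k r > v"
proof -
  have "DERIV (hh k) 0 :> - real k" using hh_deriv[of 0 k] hd_0 by simp
  then have lim: "((\<lambda>s. (hh k (0 + s) - hh k 0) / s) \<longlongrightarrow> - real k) (at 0)"
    by (simp add: DERIV_def)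
  have "eventually (\<lambda>s. (hh k (0 + s) - hh k 0) / s < - v) (at 0)"
    using order_tendstoD(2)[OF lim] v by simp
  then obtain d where d: "d > 0" and dd: "\<And>s. s \<noteq> 0 \<Longrightarrow> dist s 0 < d \<Longrightarrow> (hh k s - 1) / s < - v"
    unfolding eventually_at by (auto simp: hh_0)
  define r where "r = max (R + 1) (2 / d)"
  have r0: "r > 0" "r > R" "r \<ge> 2/d" using d unfolding r_def by (auto simp: less_max_iff_disj)
  have "1/r \<le> d/2" using r0 d by (simp add: field_simps)
  then have "dist (1/r) 0 < d" using r0 d by simp
  moreover have "1/r \<noteq> 0" using r0 by simp
  ultimately have "(hh k (1/r) - 1) / (1/r) < - v" using dd by blast
  moreover have "(hh k (1/r) - 1) / (1/r) = r * (hh k (1/r) - 1)" by simp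
  ultimately have "r * (hh k (1/r) - 1) < - v" by (simp add: mult.commute)
  then have "cl k r > v" using r0 by (simp add: cl_def eb_hh algebra_simps)
  then show ?thesis using r0 by blast
qed

lemma cl_strict_mono:
  assumes k: "k > 0" and r1: "0 < r1" and r12: "r1 < r2"
  shows "cl k r1 < cl k r2"
proof (rule ccontr)
  assume "\<not> ?thesis"
  then have ge: "cl k r1 \<ge> cl k r2" by simp
  have "cl k r2 < real k" using cl_bounds k r1 r12 by simp
  then obtain r3 where r3: "r3 > r2" "cl k r3 > cl k r2" using cl_big[OF k] by blast
  define t where "t = (r2 - r1) / (r3 - r1)"
  have t: "0 < t" "t < 1" using r12 r3 unfolding t_def by (auto simp: field_simps)
  have "t * (r3 - r1) = r2 - r1" using r12 r3 unfolding t_def by simp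
  moreover have "(1 - t) * r1 + t * r3 = r1 + t * (r3 - r1)" by (simp add: algebra_simps)
  ultimately have pt: "(1 - t) * r1 + t * r3 = r2" by simp
  have "cl k ((1 - t) *\<^sub>R r1 + t *\<^sub>R r3) \<ge> (1 - t) * cl k r1 + t * cl k r3"
    using concave_onD[OF cl_concave[of k], of t r1 r3] t r1 r12 r3 by simp
  then have le: "cl k r2 \<ge> (1 - t) * cl k r1 + t * cl k r3" using pt by simp
  have "(1 - t) * cl k r1 \<ge> (1 - t) * cl k r2" using ge t by (simp add: mult_left_mono)
  moreover have "t * cl k r3 > t * cl k r2" using r3 t by simp
  ultimately have "(1 - t) * cl k r1 + t * cl k r3 > cl k r2" by (simp add: algebra_simps)
  then show False using le by simp
qed

lemma cl_exists:
  assumes k: "k > 0" and a: "0 < a" "a < real k"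
  shows "\<exists>r > 0. cl k r = a"
proof -
  obtain b where b: "b > a" "cl k b > a" using cl_big[OF k a(2)] by blast
  have "cl k a \<le> a" using cl_bounds[OF a(1) k] by simp
  then obtain r where "a \<le> r" "r \<le> b" and ra: "cl k r = a"
    using IVT'[of "cl k" a a b] b cl_cont[OF a(1)] by auto
  then have "r > 0" using a by linarith
  then show ?thesis using ra by blast
qed

lemma sum_j: "(\<Sum>j = 0..n. real j * r^j / fact j) = r * ((\<Sum>j = 0..n. r^j / fact j) - r^n / fact n)"
proof (induction n)
  case 0 then show ?case by simp
next
  case (Suc n)
  have d: "fact (Suc n) = (1 + real n) * (fact n::real)" by (simp add: fact_Suc)
  have p: "(1 + real n) \<noteq> 0" by simp
  have "real (Suc n) * r^(Suc n) / fact (Suc n) = ((1 + real n) * (r * r^n)) / ((1 + real n) * fact n)"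
    by (simp add: d)
  also have "\<dots> = r * r^n / fact n" using p by (rule mult_divide_mult_cancel_left)
  finally have "real (Suc n) * r^(Suc n) / fact (Suc n) = r * (r^n / fact n)" by simp
  then show ?case using Suc by (simp add: algebra_simps)
qed

lemma Fpoly_eq:
  assumes mu: "mu > 0" and r: "r > 0"
  shows "Fpoly k mu (mu * r) u = mu * (\<Sum>j = 0..k. r^j / fact j) * (cl k r - u * real k)"
proof -
  have pw: "\<And>j. mu powi (int j - 1) = mu^j / mu" using mu by (simp add: power_int_diff)
  have trm: "\<And>j. (1 / mu powi (int j - 1)) * ((real j - u * real k) / fact j) * (mu * r)^j
      = mu * (real j * r^j / fact j) - mu * u * real k * (r^j / fact j)"
    using mu by (simp add: pw power_mult_distrib field_simps)
  have "Fpoly k mu (mu * r) u = mu * (\<Sum>j = 0..k. real j * r^j / fact j) - mu * u * real k * (\<Sum>j = 0..k. r^j / fact j)"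
    unfolding Fpoly_def trm by (simp add: sum_subtractf sum_distrib_left)
  also have "\<dots> = mu * (\<Sum>j = 0..k. r^j / fact j) * (cl k r - u * real k)"
  proof -
    have E: "(\<Sum>j = 0..k. r^j / fact j) > 0" using E_pos r by simp
    show ?thesis unfolding sum_j cl_def erlang_block_def using E by (simp add: field_simps)
  qed
  finally show ?thesis .
qed

lemma cl_inj: "k > 0 \<Longrightarrow> r1 > 0 \<Longrightarrow> r2 > 0 \<Longrightarrow> cl k r1 = cl k r2 \<Longrightarrow> r1 = r2"
  by (metis cl_strict_mono less_irrefl linorder_neqE_linordered_idom)

definition rinv :: "nat \<Rightarrow> real \<Rightarrow> real" where
  "rinv k a = (THE r. r > 0 \<and> cl k r = a)"

lemma rinv:
  assumes "k > 0" "0 < a" "a < real k"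
  shows "rinv k a > 0" "cl k (rinv k a) = a"
proof -
  have ex: "\<exists>!r. r > 0 \<and> cl k r = a" using cl_exists[OF assms] cl_inj[OF assms(1)] by blast
  show "rinv k a > 0" "cl k (rinv k a) = a" using theI'[OF ex] unfolding rinv_def by auto
qed

lemma froot_eq:
  assumes k: "k > 0" and mu: "mu > 0" and u: "0 < u" "u < 1"
  shows "froot k mu u = mu * rinv k (u * real k)"
proof -
  have a: "0 < u * real k" "u * real k < real k" using u k by auto
  note R = rinv[OF k a]
  show ?thesis unfolding froot_def
  proof (rule the_equality)
    show "mu * rinv k (u * real k) > 0 \<and> Fpoly k mu (mu * rinv k (u * real k)) u = 0"
      using R mu by (simp add: Fpoly_eq)
  next
    fix y assume y: "y > 0 \<and> Fpoly k mu y u = 0"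
    define r where "r = y / mu"
    have r0: "r > 0" using y mu r_def by simp
    have yr: "y = mu * r" using mu r_def by simp
    have E: "(\<Sum>j = 0..k. r^j / fact j) > 0" using E_pos r0 by simp
    have "mu * (\<Sum>j = 0..k. r^j / fact j) * (cl k r - u * real k) = 0"
      using y Fpoly_eq[OF mu r0, of k u] yr by simp
    then have "cl k r = u * real k" using mu E by simp
    then have "r = rinv k (u * real k)" using cl_inj[OF k r0 R(1)] R(2) by simp
    then show "y = mu * rinv k (u * real k)" using yr by simp
  qed
qed

lemma occ_aff: "u + v = 1 \<Longrightarrow> occ al (u * x + v * y) = u * occ al x + v * occ al y"
proof -
  assume uv: "u + v = 1"
  have "u * occ al x + v * occ al y = (u + v) - al * (u * x + v * y)" by (simp add: occ_def algebra_simps)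
  then show ?thesis using uv by (simp add: occ_def)
qed

lemma neg_comb: fixes u v a b hi :: real
  assumes "0 \<le> u" "0 \<le> v" "u + v = 1" "a < hi" "b < hi"
  shows "u * a + v * b < hi"
  using pos_comb[OF assms(1-3), of "-hi" "-a" "-b"] assms(4,5) by simp

lemma price_dom_convex: "convex (price_dom al)"
proof (rule convexI)
  fix x y u v :: real
  assume x: "x \<in> price_dom al" and y: "y \<in> price_dom al"
    and u0: "0 \<le> u" and v0: "0 \<le> v" and uv1: "u + v = 1"
  have uv: "0 \<le> u \<and> 0 \<le> v \<and> u + v = 1" using u0 v0 uv1 by simp
  have x': "0 < occ al x" "occ al x < 1" and y': "0 < occ al y" "occ al y < 1"
    using x y by (auto simp: price_dom_def)
  have e: "occ al (u * x + v * y) = u * occ al x + v * occ al y" using occ_aff uv by blast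
  have "0 < u * occ al x + v * occ al y" using pos_comb[of u v 0 "occ al x" "occ al y"] uv x' y' by simp
  moreover have "u * occ al x + v * occ al y < 1" using neg_comb[of u v "occ al x" 1 "occ al y"] uv x' y' by simp
  ultimately show "u *\<^sub>R x + v *\<^sub>R y \<in> price_dom al" using e by (simp add: price_dom_def)
qed

lemma rej_eq:
  assumes k: "k > 0" and mu: "mu > 0" and p: "p \<in> price_dom al"
  shows "rej_rate k mu al p = mu * (rinv k (occ al p * real k) - occ al p * real k)"
proof -
  have u: "0 < occ al p" "occ al p < 1" using p by (auto simp: price_dom_def)
  have a: "0 < occ al p * real k" "occ al p * real k < real k" using u k by auto
  note R = rinv[OF k a]
  define r where "r = rinv k (occ al p * real k)"
  have "rej_rate k mu al p = mu * r * erlang_block k r"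
    unfolding rej_rate_def froot_eq[OF k mu u] using mu r_def by (simp add: Let_def)
  also have e: "r * erlang_block k r = r - cl k r" by (simp add: cl_def algebra_simps)
  have "mu * r * erlang_block k r = mu * (r - cl k r)" using e by (metis mult.assoc)
  finally show ?thesis using R(2) r_def by simp
qed

lemma rinv_convex:
  assumes k: "k > 0"
  shows "convex_on {0<..<real k} (rinv k)"
proof (rule convex_onI)
  show "convex {0<..<real k}" by simp
  fix t a1 a2 :: real
  assume t: "0 < t" "t < 1" and a1: "a1 \<in> {0<..<real k}" and a2: "a2 \<in> {0<..<real k}"
  define r1 where "r1 = rinv k a1"
  define r2 where "r2 = rinv k a2"
  have R1: "r1 > 0" "cl k r1 = a1" using rinv[OF k] a1 r1_def by auto
  have R2: "r2 > 0" "cl k r2 = a2" using rinv[OF k] a2 r2_def by auto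
  define aT where "aT = (1 - t) * a1 + t * a2"
  define rt where "rt = (1 - t) * r1 + t * r2"
  have tt: "0 \<le> 1 - t" "0 \<le> t" "(1 - t) + t = 1" using t by auto
  have aT: "0 < aT" "aT < real k" unfolding aT_def
    using pos_comb[OF tt, of 0 a1 a2] neg_comb[OF tt, of a1 "real k" a2] a1 a2 by auto
  have rt0: "rt > 0" unfolding rt_def using pos_comb[OF tt, of 0 r1 r2] R1 R2 by simp
  have "cl k ((1 - t) *\<^sub>R r1 + t *\<^sub>R r2) \<ge> (1 - t) * cl k r1 + t * cl k r2"
    using concave_onD[OF cl_concave[of k], of t r1 r2] t R1 R2 by simp
  then have clrt: "cl k rt \<ge> aT" unfolding rt_def aT_def using R1 R2 by simp
  define rs where "rs = rinv k aT"
  have RS: "rs > 0" "cl k rs = aT" using rinv[OF k aT] rs_def by auto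
  have "rs \<le> rt"
  proof (rule ccontr)
    assume "\<not> rs \<le> rt"
    then have "cl k rt < cl k rs" using cl_strict_mono[OF k rt0] by simp
    then show False using clrt RS by simp
  qed
  then show "rinv k ((1 - t) *\<^sub>R a1 + t *\<^sub>R a2) \<le> (1 - t) * rinv k a1 + t * rinv k a2"
    using rs_def aT_def rt_def r1_def r2_def by simp
qed

lemma rej_convex:
  assumes k: "k > 0" and mu: "mu > 0"
  shows "convex_on (price_dom al) (rej_rate k mu al)"
proof (rule convex_onI)
  show "convex (price_dom al)" by (rule price_dom_convex)
  fix t x y :: real
  assume t: "0 < t" "t < 1" and x: "x \<in> price_dom al" and y: "y \<in> price_dom al"
  have tt: "0 \<le> 1 - t" "0 \<le> t" "(1 - t) + t = 1" using t by auto
  define z where "z = (1 - t) * x + t * y"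
  have z: "z \<in> price_dom al" unfolding z_def using convexD[OF price_dom_convex x y tt] by simp
  have ox: "0 < occ al x * real k" "occ al x * real k < real k" using x k by (auto simp: price_dom_def)
  have oy: "0 < occ al y * real k" "occ al y * real k < real k" using y k by (auto simp: price_dom_def)
  have "occ al z = (1 - t) * occ al x + t * occ al y" unfolding z_def using occ_aff[OF tt(3)] by blast
  then have "occ al z * real k = ((1 - t) * occ al x + t * occ al y) * real k" by simp
  then have oz: "occ al z * real k = (1 - t) * (occ al x * real k) + t * (occ al y * real k)"
    by (simp add: algebra_simps)
  have "rinv k ((1 - t) *\<^sub>R (occ al x * real k) + t *\<^sub>R (occ al y * real k))
      \<le> (1 - t) * rinv k (occ al x * real k) + t * rinv k (occ al y * real k)"
    using convex_onD[OF rinv_convex[OF k], of t] t ox oy by simp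
  then have ri: "rinv k (occ al z * real k) \<le> (1 - t) * rinv k (occ al x * real k) + t * rinv k (occ al y * real k)"
    using oz by simp
  have "rej_rate k mu al z = mu * (rinv k (occ al z * real k) - occ al z * real k)" using rej_eq[OF k mu z] .
  also have "\<dots> \<le> mu * (((1 - t) * rinv k (occ al x * real k) + t * rinv k (occ al y * real k)) - occ al z * real k)"
    using ri mu by (simp add: mult_left_mono)
  also have "\<dots> = (1 - t) * (mu * (rinv k (occ al x * real k) - occ al x * real k))
      + t * (mu * (rinv k (occ al y * real k) - occ al y * real k))"
    unfolding oz by (simp add: algebra_simps)
  also have "\<dots> = (1 - t) * rej_rate k mu al x + t * rej_rate k mu al y"
    using rej_eq[OF k mu x] rej_eq[OF k mu y] by simp
  finally show "rej_rate k mu al ((1 - t) *\<^sub>R x + t *\<^sub>R y) \<le> (1 - t) * rej_rate k mu al x + t * rej_rate k mu al y"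
    using z_def by simp
qed

theorem theorem1:
  fixes k :: "'m::finite \<Rightarrow> nat"
    and mu alpha xbar :: "'m \<Rightarrow> real"
  assumes "\<And>i. k i > 0"
    and "\<And>i. mu i > 0"
    and "\<And>i. alpha i \<noteq> 0"
  defines "D \<equiv> {p :: real ^ 'm. \<forall>i. p $ i \<in> price_dom (alpha i)}"
  shows "convex D
    \<and> (\<forall>i. concave_on D (\<lambda>p. occ (alpha i) (p $ i)))
    \<and> (\<forall>i. convex (price_dom (alpha i))
           \<and> convex_on (price_dom (alpha i)) (rej_rate (k i) (mu i) (alpha i)))
    \<and> convex {p \<in> D. \<forall>i. rej_rate (k i) (mu i) (alpha i) (p $ i) \<le> xbar i}"
proof -
  have cD: "convex D"
  proof (rule convexI)
    fix x y :: "real ^ 'm" and u v :: real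
    assume x: "x \<in> D" and y: "y \<in> D"
      and u0: "0 \<le> u" and v0: "0 \<le> v" and uv1: "u + v = 1"
    have uv: "0 \<le> u \<and> 0 \<le> v \<and> u + v = 1" using u0 v0 uv1 by simp
    have "\<forall>i. (u *\<^sub>R x + v *\<^sub>R y) $ i \<in> price_dom (alpha i)"
    proof
      fix i
      have "x $ i \<in> price_dom (alpha i)" "y $ i \<in> price_dom (alpha i)" using x y unfolding D_def by auto
      then show "(u *\<^sub>R x + v *\<^sub>R y) $ i \<in> price_dom (alpha i)"
        using convexD[OF price_dom_convex, of "x $ i" "alpha i" "y $ i" u v] uv by simp
    qed
    then show "u *\<^sub>R x + v *\<^sub>R y \<in> D" unfolding D_def by simp
  qed
  have cc: "\<forall>i. concave_on D (\<lambda>p. occ (alpha i) (p $ i))"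
  proof
    fix i
    show "concave_on D (\<lambda>p. occ (alpha i) (p $ i))"
      unfolding concave_on_iff using cD occ_aff by simp
  qed
  have rc: "\<forall>i. convex (price_dom (alpha i)) \<and> convex_on (price_dom (alpha i)) (rej_rate (k i) (mu i) (alpha i))"
    using price_dom_convex rej_convex assms(1,2) by blast
  have "convex {p \<in> D. \<forall>i. rej_rate (k i) (mu i) (alpha i) (p $ i) \<le> xbar i}"
  proof (rule convexI)
    fix x y :: "real ^ 'm" and u v :: real
    assume x: "x \<in> {p \<in> D. \<forall>i. rej_rate (k i) (mu i) (alpha i) (p $ i) \<le> xbar i}"
      and y: "y \<in> {p \<in> D. \<forall>i. rej_rate (k i) (mu i) (alpha i) (p $ i) \<le> xbar i}"
      and u0: "0 \<le> u" and v0: "0 \<le> v" and uv1: "u + v = 1"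
    have uv: "0 \<le> u \<and> 0 \<le> v \<and> u + v = 1" using u0 v0 uv1 by simp
    have xD: "x \<in> D" and yD: "y \<in> D" using x y by auto
    have zD: "u *\<^sub>R x + v *\<^sub>R y \<in> D" using convexD[OF cD xD yD] uv by simp
    have "\<forall>i. rej_rate (k i) (mu i) (alpha i) ((u *\<^sub>R x + v *\<^sub>R y) $ i) \<le> xbar i"
    proof
      fix i
      have xi: "x $ i \<in> price_dom (alpha i)" and yi: "y $ i \<in> price_dom (alpha i)"
        using xD yD unfolding D_def by auto
      have cvx: "\<forall>a\<in>price_dom (alpha i). \<forall>b\<in>price_dom (alpha i). \<forall>u\<ge>0. \<forall>v\<ge>0. u + v = 1 \<longrightarrow>
          rej_rate (k i) (mu i) (alpha i) (u *\<^sub>R a + v *\<^sub>R b) \<le> u * rej_rate (k i) (mu i) (alpha i) a + v * rej_rate (k i) (mu i) (alpha i) b"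
        using rc unfolding convex_on_def by blast
      have "rej_rate (k i) (mu i) (alpha i) ((u *\<^sub>R x + v *\<^sub>R y) $ i)
          \<le> u * rej_rate (k i) (mu i) (alpha i) (x $ i) + v * rej_rate (k i) (mu i) (alpha i) (y $ i)"
        using cvx[rule_format, OF xi yi, of u v] uv by simp
      also have "\<dots> \<le> u * xbar i + v * xbar i"
        using x y uv by (intro add_mono mult_left_mono) auto
      also have "\<dots> = xbar i" using uv by (simp add: distrib_right[symmetric])
      finally show "rej_rate (k i) (mu i) (alpha i) ((u *\<^sub>R x + v *\<^sub>R y) $ i) \<le> xbar i" .
    qed
    then show "u *\<^sub>R x + v *\<^sub>R y \<in> {p \<in> D. \<forall>i. rej_rate (k i) (mu i) (alpha i) (p $ i) \<le> xbar i}"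
      using zD by simp
  qed
  then show ?thesis using cD cc rc by blast
qed

end
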